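(* Let $\lambda, N, t, m, s, v$ be positive integers. (1) If $t\ge 2$, $t\le m(t-1)$, and there exists an $OCA_{\lambda}(N;t,m,t-1,v)$, then there exists an $OCA_{\lambda}(N;t,m,t,v)$. (2) If $s\ge 2$, $2\le t\le m(s-1)$, and there exists an $OCA_{\lambda}(N;t,m,s,v)$, then there exists an $OCA_{\lambda}(N;t,m,s-1,v)$. (3) If $m\ge 2$, $2\le t\le (m-1)s$, and there exists an $OCA_{\lambda}(N;t,m,s,v)$, then there exists an $OCA_{\lambda}(N;t,m-1,s,v)$.
   Context: For positive integers $m,s$, the RT poset $[m\times s]$ is the set $\{1,\ldots,ms\}$ partitioned into $m$ blocks $B_i=\{is+1,\ldots,(i+1)s\}$ ($i=0,\ldots,m-1$); each block is a chain under the usual order of the integers, and elements of different blocks are incomparable. An ideal is a subset $I$ such that $b\in I$ and $a\preceq b$ imply $a\in I$; an anti-ideal is the complement of an ideal. Given an $N\times n$ array $A$ over an alphabet $V$ of size $v$, a set of $t$ columns is $\lambda$-covered if in the $N\times t$ subarray formed by those columns every $t$-tuple over $V$ appears as a row at least $\lambda$ times. For positive integers with $2\le t\le ms$, an ordered covering array $OCA_{\lambda}(N;t,m,s,v)$ is an $N\times ms$ array over an alphabet of size $v$ whose columns are labeled by the elements of the RT poset $[m\times s]$, such that for every anti-ideal $J$ of size $t$ the set of columns labeled by $J$ is $\lambda$-covered. *)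

theory Defs
  imports Main "HOL-Library.FuncSet"
begin

text \<open>RT poset [m x s] on {1..m*s}: element x lies in block (x-1) div s; a precedes b
  iff they lie in the same block and a \<le> b.\<close>

definition rt_le :: "nat \<Rightarrow> nat \<Rightarrow> nat \<Rightarrow> bool" where
  "rt_le s a b \<longleftrightarrow> (a - 1) div s = (b - 1) div s \<and> a \<le> b"

definition rt_ideal :: "nat \<Rightarrow> nat \<Rightarrow> nat set \<Rightarrow> bool" where
  "rt_ideal m s I \<longleftrightarrow> I \<subseteq> {1..m*s} \<and>
     (\<forall>a\<in>{1..m*s}. \<forall>b\<in>I. rt_le s a b \<longrightarrow> a \<in> I)"

definition rt_anti_ideal :: "nat \<Rightarrow> nat \<Rightarrow> nat set \<Rightarrow> bool" where
  "rt_anti_ideal m s J \<longleftrightarrow> (\<exists>I. rt_ideal m s I \<and> J = {1..m*s} - I)"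

text \<open>An N x n array over alphabet V = {0..<v} is a list of N rows; each row is a function
  from column labels to symbols (only its values on the column labels matter).\<close>

definition lam_covered :: "nat \<Rightarrow> nat \<Rightarrow> (nat \<Rightarrow> nat) list \<Rightarrow> nat set \<Rightarrow> bool" where
  "lam_covered lam v A J \<longleftrightarrow>
     (\<forall>u \<in> J \<rightarrow>\<^sub>E {0..<v}. lam \<le> length (filter (\<lambda>r. \<forall>j\<in>J. r j = u j) A))"

definition is_OCA :: "nat \<Rightarrow> nat \<Rightarrow> nat \<Rightarrow> nat \<Rightarrow> nat \<Rightarrow> nat \<Rightarrow> (nat \<Rightarrow> nat) list \<Rightarrow> bool" where
  "is_OCA lam N t m s v A \<longleftrightarrow>
     2 \<le> t \<and> t \<le> m * s \<and> length A = N \<and>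
     (\<forall>r\<in>set A. \<forall>c\<in>{1..m*s}. r c < v) \<and>
     (\<forall>J. rt_anti_ideal m s J \<and> card J = t \<longrightarrow> lam_covered lam v A J)"

definition OCA_exists :: "nat \<Rightarrow> nat \<Rightarrow> nat \<Rightarrow> nat \<Rightarrow> nat \<Rightarrow> nat \<Rightarrow> bool" where
  "OCA_exists lam N t m s v \<longleftrightarrow> (\<exists>A. is_OCA lam N t m s v A)"

end

theory Submission
  imports Defs
begin

lemma cov_transfer:
  assumes inj: "inj_on f J" and cov: "lam_covered lam v A (f ` J)"
  shows "lam_covered lam v (map (\<lambda>r. r \<circ> f) A) J"
  unfolding lam_covered_def
proof
  fix u assume u: "u \<in> J \<rightarrow>\<^sub>E {0..<v}"
  define w where "w = restrict (\<lambda>y. u (the_inv_into J f y)) (f ` J)"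
  have wf: "\<And>j. j \<in> J \<Longrightarrow> w (f j) = u j"
    using inj by (simp add: w_def the_inv_into_f_f)
  have "w \<in> f ` J \<rightarrow>\<^sub>E {0..<v}"
    using u wf unfolding w_def by (auto simp: the_inv_into_f_f inj PiE_iff)
  then have "lam \<le> length (filter (\<lambda>r. \<forall>y\<in>f ` J. r y = w y) A)"
    using cov unfolding lam_covered_def by blast
  also have "filter (\<lambda>r. \<forall>y\<in>f ` J. r y = w y) A
           = filter ((\<lambda>r. \<forall>j\<in>J. r j = u j) \<circ> (\<lambda>r. r \<circ> f)) A"
    by (rule filter_cong) (auto simp: wf)
  finally show "lam \<le> length (filter (\<lambda>r. \<forall>j\<in>J. r j = u j) (map (\<lambda>r. r \<circ> f) A))"
    by (simp add: filter_map)
qed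

lemma transfer:
  assumes oca: "is_OCA lam N t m s v A" and t: "2 \<le> t" "t \<le> m' * s'"
    and rng: "\<forall>x\<in>{1..m'*s'}. f x \<in> {1..m*s}"
    and anti: "\<forall>J. rt_anti_ideal m' s' J \<and> card J = t \<longrightarrow> inj_on f J \<and> rt_anti_ideal m s (f ` J)"
  shows "is_OCA lam N t m' s' v (map (\<lambda>r. r \<circ> f) A)"
proof -
  have "\<forall>r\<in>set (map (\<lambda>r. r \<circ> f) A). \<forall>c\<in>{1..m'*s'}. r c < v"
    using oca rng unfolding is_OCA_def by auto
  moreover have "\<forall>J. rt_anti_ideal m' s' J \<and> card J = t \<longrightarrow> lam_covered lam v (map (\<lambda>r. r \<circ> f) A) J"
  proof (intro allI impI)
    fix J assume J: "rt_anti_ideal m' s' J \<and> card J = t"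
    then have i: "inj_on f J" and a: "rt_anti_ideal m s (f ` J)" using anti by auto
    have "card (f ` J) = t" using J i by (simp add: card_image)
    then have "lam_covered lam v A (f ` J)" using oca a unfolding is_OCA_def by blast
    then show "lam_covered lam v (map (\<lambda>r. r \<circ> f) A) J" using cov_transfer i by blast
  qed
  ultimately show ?thesis using oca t unfolding is_OCA_def by auto
qed

lemma anti_up:
  "rt_anti_ideal m s J \<longleftrightarrow> J \<subseteq> {1..m*s} \<and> (\<forall>a\<in>J. \<forall>b\<in>{1..m*s}. rt_le s a b \<longrightarrow> b \<in> J)"
proof
  assume "rt_anti_ideal m s J"
  then obtain I where I: "rt_ideal m s I" "J = {1..m*s} - I" unfolding rt_anti_ideal_def by blast
  then show "J \<subseteq> {1..m*s} \<and> (\<forall>a\<in>J. \<forall>b\<in>{1..m*s}. rt_le s a b \<longrightarrow> b \<in> J)"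
    unfolding rt_ideal_def by blast
next
  assume A: "J \<subseteq> {1..m*s} \<and> (\<forall>a\<in>J. \<forall>b\<in>{1..m*s}. rt_le s a b \<longrightarrow> b \<in> J)"
  have "rt_ideal m s ({1..m*s} - J)" using A unfolding rt_ideal_def by blast
  moreover have "J = {1..m*s} - ({1..m*s} - J)" using A by blast
  ultimately show "rt_anti_ideal m s J" unfolding rt_anti_ideal_def by blast
qed

lemma decomp:
  fixes x m s :: nat
  assumes "x \<in> {1..m*s}" "0 < s"
  shows "\<exists>i<m. \<exists>k<s. x = i*s+k+1"
proof -
  have x: "x - 1 < m * s" "1 \<le> x" using assms by auto
  have "(x-1) div s < m" using x assms by (simp add: div_less_iff_less_mult mult.commute)
  moreover have "(x-1) mod s < s" using assms by simp
  moreover have "x = ((x-1) div s)*s + (x-1) mod s + 1" using x by simp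
  ultimately show ?thesis by blast
qed

lemma blk_div: "(k::nat) < s \<Longrightarrow> (i*s+k+1 - 1) div s = i"
  by simp

lemma uniq: "(k::nat) < s \<Longrightarrow> k' < s \<Longrightarrow> i*s+k = i'*s+k' \<Longrightarrow> i = i' \<and> k = k'"
proof -
  assume a: "k < s" "k' < s" "i*s+k = i'*s+k'"
  have "(i*s+k) div s = i" "(i*s+k) mod s = k" using a(1) by simp_all
  moreover have "(i'*s+k') div s = i'" "(i'*s+k') mod s = k'" using a(2) by simp_all
  ultimately show ?thesis using a by metis
qed

lemma rt_le_blk:
  fixes k s i i' k' :: nat
  assumes "k < s" "k' < s"
  shows "rt_le s (i*s+k+1) (i'*s+k'+1) \<longleftrightarrow> i = i' \<and> k \<le> k'"
  using assms unfolding rt_le_def by auto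

lemma in_rng: "(i::nat) < m \<Longrightarrow> k < s \<Longrightarrow> i*s+k+1 \<in> {1..m*s}"
proof -
  assume a: "i < m" "k < s"
  have "Suc i * s \<le> m * s" using a by (intro mult_le_mono1) simp
  then show ?thesis using a by auto
qed

lemma anti_iff:
  assumes "0 < s"
  shows "rt_anti_ideal m s J \<longleftrightarrow> J \<subseteq> {1..m*s} \<and>
     (\<forall>i<m. \<forall>k k'. k \<le> k' \<longrightarrow> k' < s \<longrightarrow> i*s+k+1 \<in> J \<longrightarrow> i*s+k'+1 \<in> J)"
proof
  assume "rt_anti_ideal m s J"
  then have A: "J \<subseteq> {1..m*s}" "\<forall>a\<in>J. \<forall>b\<in>{1..m*s}. rt_le s a b \<longrightarrow> b \<in> J"
    unfolding anti_up by auto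
  show "J \<subseteq> {1..m*s} \<and>
     (\<forall>i<m. \<forall>k k'. k \<le> k' \<longrightarrow> k' < s \<longrightarrow> i*s+k+1 \<in> J \<longrightarrow> i*s+k'+1 \<in> J)"
  proof (intro conjI allI impI)
    fix i k k' assume h: "i < m" "k \<le> k'" "k' < s" "i*s+k+1 \<in> J"
    then have "rt_le s (i*s+k+1) (i*s+k'+1)" using rt_le_blk[of k s k' i i] by (simp del: add_Suc_right add_Suc add_Suc_shift)
    then show "i*s+k'+1 \<in> J" using A h in_rng by blast
  qed (use A in auto)
next
  assume A: "J \<subseteq> {1..m*s} \<and>
     (\<forall>i<m. \<forall>k k'. k \<le> k' \<longrightarrow> k' < s \<longrightarrow> i*s+k+1 \<in> J \<longrightarrow> i*s+k'+1 \<in> J)"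
  have "\<forall>a\<in>J. \<forall>b\<in>{1..m*s}. rt_le s a b \<longrightarrow> b \<in> J"
  proof (intro ballI impI)
    fix a b assume h: "a \<in> J" "b \<in> {1..m*s}" "rt_le s a b"
    obtain i k where a: "i<m" "k<s" "a = i*s+k+1" using decomp[of a m s] h A assms by blast
    obtain i' k' where b: "i'<m" "k'<s" "b = i'*s+k'+1" using decomp[of b m s] h assms by blast
    have "i = i' \<and> k \<le> k'" using h a b rt_le_blk by simp
    then show "b \<in> J" using A a b h by blast
  qed
  then show "rt_anti_ideal m s J" using A unfolding anti_up by blast
qed



lemma part3:
  assumes oca: "is_OCA lam N t (Suc M) s v A" and t: "2 \<le> t" "t \<le> M*s" and s: "0 < s"
  shows "OCA_exists lam N t M s v"
proof -
  have rng: "\<forall>x\<in>{1..M*s}. id x \<in> {1..Suc M*s}" by auto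
  have anti: "\<forall>J. rt_anti_ideal M s J \<and> card J = t \<longrightarrow> inj_on id J \<and> rt_anti_ideal (Suc M) s (id ` J)"
  proof (intro allI impI conjI)
    fix J assume "rt_anti_ideal M s J \<and> card J = t"
    then have A: "J \<subseteq> {1..M*s}"
      "\<forall>i<M. \<forall>k k'. k \<le> k' \<longrightarrow> k' < s \<longrightarrow> i*s+k+1 \<in> J \<longrightarrow> i*s+k'+1 \<in> J"
      using anti_iff[OF s] by auto
    show "inj_on id J" by simp
    have "id ` J \<subseteq> {1..Suc M*s}" using A(1) by auto
    moreover have "\<forall>i<Suc M. \<forall>k k'. k \<le> k' \<longrightarrow> k' < s \<longrightarrow> i*s+k+1 \<in> id ` J \<longrightarrow> i*s+k'+1 \<in> id ` J"
    proof (intro allI impI)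
      fix i k k' assume h: "i < Suc M" "k \<le> k'" "k' < s" "i*s+k+1 \<in> id ` J"
      then have "i*s+k+1 \<le> M*s" using A(1) by auto
      then have "i*s < M*s" by linarith
      then have "i < M" by simp
      then show "i*s+k'+1 \<in> id ` J" using A(2) h by simp
    qed
    ultimately show "rt_anti_ideal (Suc M) s (id ` J)" unfolding anti_iff[OF s] by (rule conjI)
  qed
  show ?thesis unfolding OCA_exists_def by (rule exI, rule transfer[OF oca t rng anti])
qed

definition f2 :: "nat \<Rightarrow> nat \<Rightarrow> nat" where
  "f2 p x = ((x-1) div p) * Suc p + (x-1) mod p + 2"

lemma f2_blk: "k < p \<Longrightarrow> f2 p (i*p+k+1) = i * Suc p + Suc k + 1"
  unfolding f2_def by simp

lemma part2:
  assumes oca: "is_OCA lam N t m (Suc p) v A" and t: "2 \<le> t" "t \<le> m*p" and p: "0 < p"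
  shows "OCA_exists lam N t m p v"
proof -
  have s: "0 < Suc p" by simp
  have rng: "\<forall>x\<in>{1..m*p}. f2 p x \<in> {1..m*Suc p}"
  proof
    fix x assume "x \<in> {1..m*p}"
    then obtain i k where ik: "i<m" "k<p" "x = i*p+k+1" using decomp[of x m p] p by blast
    have "i * Suc p + Suc k + 1 \<in> {1..m*Suc p}" using in_rng[of i m "Suc k" "Suc p"] ik by simp
    then show "f2 p x \<in> {1..m*Suc p}" unfolding ik(3) f2_blk[OF ik(2)] .
  qed
  have anti: "\<forall>J. rt_anti_ideal m p J \<and> card J = t \<longrightarrow> inj_on (f2 p) J \<and> rt_anti_ideal m (Suc p) (f2 p ` J)"
  proof (intro allI impI conjI)
    fix J assume "rt_anti_ideal m p J \<and> card J = t"
    then have A: "J \<subseteq> {1..m*p}"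
      "\<forall>i<m. \<forall>k k'. k \<le> k' \<longrightarrow> k' < p \<longrightarrow> i*p+k+1 \<in> J \<longrightarrow> i*p+k'+1 \<in> J"
      using anti_iff[OF p] by auto
    show "inj_on (f2 p) J"
    proof
      fix x y assume h: "x \<in> J" "y \<in> J" "f2 p x = f2 p y"
      obtain i k where x: "i<m" "k<p" "x = i*p+k+1" using decomp[of x m p] p h(1) A(1) by blast
      obtain i' k' where y: "i'<m" "k'<p" "y = i'*p+k'+1" using decomp[of y m p] p h(2) A(1) by blast
      have "i * Suc p + Suc k = i' * Suc p + Suc k'" using h(3) unfolding x(3) y(3) f2_blk[OF x(2)] f2_blk[OF y(2)] by simp
      then have "i = i' \<and> Suc k = Suc k'" using uniq[of "Suc k" "Suc p" "Suc k'" i i'] x y by simp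
      then show "x = y" using x y by simp
    qed
    have "f2 p ` J \<subseteq> {1..m*Suc p}" using A(1) rng by blast
    moreover have "\<forall>i<m. \<forall>k k'. k \<le> k' \<longrightarrow> k' < Suc p \<longrightarrow> i*Suc p+k+1 \<in> f2 p ` J \<longrightarrow> i*Suc p+k'+1 \<in> f2 p ` J"
    proof (intro allI impI)
      fix i k k' assume h: "i < m" "k \<le> k'" "k' < Suc p" "i*Suc p+k+1 \<in> f2 p ` J"
      then obtain x where hx: "x \<in> J" "i*Suc p+k+1 = f2 p x" by blast
      obtain i0 k0 where x: "i0<m" "k0<p" "x = i0*p+k0+1" using decomp[of x m p] p hx(1) A(1) by blast
      have "i*Suc p+k = i0 * Suc p + Suc k0" using hx(2) unfolding x(3) f2_blk[OF x(2)] by simp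
      then have e: "i = i0 \<and> k = Suc k0" using uniq[of k "Suc p" "Suc k0" i i0] x h by simp
      then have "i*p+k0+1 \<in> J" using hx(1) x(3) e by simp
      moreover have "k0 \<le> k'-1" "k'-1 < p" using h e by auto
      ultimately have "i*p+(k'-1)+1 \<in> J" using A(2)[rule_format, OF h(1)] by blast
      moreover have "f2 p (i*p+(k'-1)+1) = i*Suc p+k'+1" using f2_blk[of "k'-1" p i] h e by simp
      ultimately show "i*Suc p+k'+1 \<in> f2 p ` J" by (metis image_eqI)
    qed
    ultimately show "rt_anti_ideal m (Suc p) (f2 p ` J)" unfolding anti_iff[OF s] by (rule conjI)
  qed
  show ?thesis unfolding OCA_exists_def by (rule exI, rule transfer[OF oca t rng anti])
qed

definition f1 :: "nat \<Rightarrow> nat \<Rightarrow> nat \<Rightarrow> nat" where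
  "f1 m p x = (if (x-1) mod Suc p = 0 then (Suc ((x-1) div Suc p) mod m)*p + (p-1) + 1
               else ((x-1) div Suc p)*p + ((x-1) mod Suc p - 1) + 1)"

lemma blk_mod: "(k::nat) < s \<Longrightarrow> (i*s+k+1 - 1) mod s = k"
  by simp

lemma f1_bot: "f1 m p (i*Suc p + 0 + 1) = (Suc i mod m)*p + (p-1) + 1"
  unfolding f1_def blk_div[of 0 "Suc p" i, OF zero_less_Suc] blk_mod[of 0 "Suc p" i, OF zero_less_Suc]
  by simp

lemma f1_up: "k < p \<Longrightarrow> f1 m p (i*Suc p + Suc k + 1) = i*p + k + 1"
proof -
  assume k: "k < p"
  then have k': "Suc k < Suc p" by simp
  show ?thesis unfolding f1_def blk_div[of "Suc k" "Suc p" i, OF k'] blk_mod[of "Suc k" "Suc p" i, OF k']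
    by simp
qed

lemma part1:
  assumes oca: "is_OCA lam N (Suc p) m p v A" and t: "2 \<le> Suc p" "Suc p \<le> m*p"
  shows "OCA_exists lam N (Suc p) m (Suc p) v"
proof -
  have p: "0 < p" using t by simp
  have s: "0 < Suc p" by simp
  have m2: "2 \<le> m"
  proof (rule ccontr)
    assume "\<not> 2 \<le> m" then have "m \<le> 1" by simp
    then have "m*p \<le> 1*p" by (rule mult_le_mono1)
    then have "m*p \<le> p" by (simp only: mult_1)
    then show False using t by linarith
  qed
  have jne: "Suc i mod m \<noteq> i" if "i < m" for i
  proof (cases "Suc i < m")
    case True then show ?thesis by simp
  next
    case False then have "Suc i = m" using that by simp
    then show ?thesis using m2 by auto
  qed
  have jlt: "Suc i mod m < m" for i using m2 by simp
  have t2: "Suc p \<le> m * Suc p" using t by simp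
  have rng: "\<forall>x\<in>{1..m*Suc p}. f1 m p x \<in> {1..m*p}"
  proof
    fix x assume "x \<in> {1..m*Suc p}"
    then obtain i k where ik: "i<m" "k<Suc p" "x = i*Suc p+k+1" using decomp[of x m "Suc p"] by blast
    show "f1 m p x \<in> {1..m*p}"
    proof (cases k)
      case 0
      have "(Suc i mod m)*p + (p-1) + 1 \<in> {1..m*p}" using in_rng[OF jlt[of i], of "p-1" p] p by simp
      then show ?thesis using ik 0 f1_bot by simp
    next
      case (Suc k0)
      then have "k0 < p" using ik by simp
      then show ?thesis using ik Suc f1_up[of k0 p m i] in_rng[of i m k0 p] by simp
    qed
  qed
  have anti: "\<forall>J. rt_anti_ideal m (Suc p) J \<and> card J = Suc p \<longrightarrow> inj_on (f1 m p) J \<and> rt_anti_ideal m p (f1 m p ` J)"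
  proof (intro allI impI)
    fix J assume J: "rt_anti_ideal m (Suc p) J \<and> card J = Suc p"
    then have A: "J \<subseteq> {1..m*Suc p}"
      "\<forall>i<m. \<forall>k k'. k \<le> k' \<longrightarrow> k' < Suc p \<longrightarrow> i*Suc p+k+1 \<in> J \<longrightarrow> i*Suc p+k'+1 \<in> J"
      using anti_iff[OF s] by auto
    have fJ: "finite J" using A(1) finite_subset by blast
    have sub: "f1 m p ` J \<subseteq> {1..m*p}" using A(1) rng by blast
    show "inj_on (f1 m p) J \<and> rt_anti_ideal m p (f1 m p ` J)"
    proof (cases "\<exists>i<m. i*Suc p + 0 + 1 \<in> J")
      case True
      then obtain i where i: "i < m" "i*Suc p + 0 + 1 \<in> J" by blast
      define B where "B = (\<lambda>k. i*Suc p+k+1) ` {..<Suc p}"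
      have BJ: "B \<subseteq> J"
      proof
        fix x assume "x \<in> B"
        then obtain k where k: "k < Suc p" "x = i*Suc p+k+1" unfolding B_def by blast
        show "x \<in> J" using A(2)[rule_format, OF i(1) _ k(1) i(2)] k by simp
      qed
      have "inj_on (\<lambda>k. i*Suc p+k+1) {..<Suc p}" by (rule inj_onI) simp
      then have "card B = Suc p" unfolding B_def by (simp add: card_image)
      then have JB: "J = B" using card_subset_eq[OF fJ BJ] J by simp
      have inj: "inj_on (f1 m p) J"
      proof
        fix x y assume h: "x \<in> J" "y \<in> J" "f1 m p x = f1 m p y"
        obtain k where k: "k < Suc p" "x = i*Suc p+k+1" using h(1) unfolding JB B_def by blast
        obtain k' where k': "k' < Suc p" "y = i*Suc p+k'+1" using h(2) unfolding JB B_def by blast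
        show "x = y"
        proof (cases k)
          case 0
          show ?thesis
          proof (cases k')
            case 0 then show ?thesis using k k' \<open>k = 0\<close> by simp
          next
            case (Suc k1)
            have "(Suc i mod m)*p + (p-1) + 1 = i*p+k1+1"
              using h(3) k k' \<open>k = 0\<close> Suc f1_bot[of m p i] f1_up[of k1 p m i] by simp
            then have "Suc i mod m = i" using uniq[of "p-1" p k1 "Suc i mod m" i] p Suc k' by simp
            then show ?thesis using jne i by simp
          qed
        next
          case (Suc k0)
          show ?thesis
          proof (cases k')
            case 0
            have "(Suc i mod m)*p + (p-1) + 1 = i*p+k0+1"
              using h(3) k k' \<open>k' = 0\<close> Suc f1_bot[of m p i] f1_up[of k0 p m i] by simp
            then have "Suc i mod m = i" using uniq[of "p-1" p k0 "Suc i mod m" i] p Suc k by simp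
            then show ?thesis using jne i by simp
          next
            case (Suc k1)
            have "i*p+k0+1 = i*p+k1+1"
              using h(3) k k' \<open>k = Suc k0\<close> Suc f1_up[of k1 p m i] f1_up[of k0 p m i] by simp
            then show ?thesis using k k' \<open>k = Suc k0\<close> Suc by simp
          qed
        qed
      qed
      have "\<forall>i'<m. \<forall>kk kk'. kk \<le> kk' \<longrightarrow> kk' < p \<longrightarrow> i'*p+kk+1 \<in> f1 m p ` J \<longrightarrow> i'*p+kk'+1 \<in> f1 m p ` J"
      proof (intro allI impI)
        fix i' kk kk' assume h: "i' < m" "kk \<le> kk'" "kk' < p" "i'*p+kk+1 \<in> f1 m p ` J"
        then obtain x where hx: "x \<in> J" "i'*p+kk+1 = f1 m p x" by blast
        obtain k where k: "k < Suc p" "x = i*Suc p+k+1" using hx(1) unfolding JB B_def by blast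
        show "i'*p+kk'+1 \<in> f1 m p ` J"
        proof (cases k)
          case 0
          have "i'*p+kk = (Suc i mod m)*p + (p-1)" using hx(2) k 0 f1_bot[of m p i] by simp
          then have "kk = p - 1" using uniq[of kk p "p-1" i' "Suc i mod m"] h p by simp
          then have "kk' = kk" using h by simp
          then show ?thesis using h(4) by simp
        next
          case (Suc k0)
          have "i'*p+kk = i*p+k0" using hx(2) k Suc f1_up[of k0 p m i] by simp
          then have e: "i' = i \<and> kk = k0" using uniq[of kk p k0 i' i] h k Suc by simp
          have "i*Suc p + Suc kk' + 1 \<in> J" using BJ h(3) unfolding JB B_def by simp
          moreover have "f1 m p (i*Suc p + Suc kk' + 1) = i'*p+kk'+1" using f1_up[of kk' p m i] h(3) e by simp
          ultimately show ?thesis by (metis image_eqI)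
        qed
      qed
      then have "rt_anti_ideal m p (f1 m p ` J)" using sub unfolding anti_iff[OF p] by (intro conjI)
      then show ?thesis using inj by simp
    next
      case False
      have dec: "\<exists>i<m. \<exists>k<p. x = i*Suc p + Suc k + 1" if xJ: "x \<in> J" for x
      proof -
        obtain i k where ik: "i<m" "k<Suc p" "x = i*Suc p+k+1" using decomp[of x m "Suc p"] xJ A(1) by blast
        have "k \<noteq> 0"
        proof
          assume "k = 0"
          then have "i*Suc p + 0 + 1 \<in> J" using ik xJ by simp
          then show False using False ik(1) by blast
        qed
        then obtain k0 where "k = Suc k0" by (cases k) auto
        then show ?thesis using ik by auto
      qed
      have inj: "inj_on (f1 m p) J"
      proof
        fix x y assume h: "x \<in> J" "y \<in> J" "f1 m p x = f1 m p y"
        obtain i k where x: "i<m" "k<p" "x = i*Suc p + Suc k + 1" using dec h(1) by blast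
        obtain i' k' where y: "i'<m" "k'<p" "y = i'*Suc p + Suc k' + 1" using dec h(2) by blast
        have "i*p+k = i'*p+k'" using h(3) unfolding x(3) y(3) f1_up[OF x(2)] f1_up[OF y(2)] by simp
        then have "i = i' \<and> k = k'" using uniq[of k p k' i i'] x y by simp
        then show "x = y" using x y by simp
      qed
      have "\<forall>i'<m. \<forall>kk kk'. kk \<le> kk' \<longrightarrow> kk' < p \<longrightarrow> i'*p+kk+1 \<in> f1 m p ` J \<longrightarrow> i'*p+kk'+1 \<in> f1 m p ` J"
      proof (intro allI impI)
        fix i' kk kk' assume h: "i' < m" "kk \<le> kk'" "kk' < p" "i'*p+kk+1 \<in> f1 m p ` J"
        then obtain x where hx: "x \<in> J" "i'*p+kk+1 = f1 m p x" by blast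
        obtain i k where x: "i<m" "k<p" "x = i*Suc p + Suc k + 1" using dec hx(1) by blast
        have "i'*p+kk = i*p+k" using hx(2) unfolding x(3) f1_up[OF x(2)] by simp
        then have e: "i' = i \<and> kk = k" using uniq[of kk p k i' i] h x by simp
        have "Suc k \<le> Suc kk'" "Suc kk' < Suc p" using h e by auto
        then have "i*Suc p + Suc kk' + 1 \<in> J" using A(2)[rule_format, OF x(1)] hx(1) x(3) by blast
        moreover have "f1 m p (i*Suc p + Suc kk' + 1) = i'*p+kk'+1" using f1_up[of kk' p m i] h(3) e by simp
        ultimately show "i'*p+kk'+1 \<in> f1 m p ` J" by (metis image_eqI)
      qed
      then have "rt_anti_ideal m p (f1 m p ` J)" using sub unfolding anti_iff[OF p] by (intro conjI)
      then show ?thesis using inj by simp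
    qed
  qed
  show ?thesis unfolding OCA_exists_def by (rule exI, rule transfer[OF oca t(1) t2 rng anti])
qed


theorem proposition2:
  fixes lam N t m s v :: nat
  assumes pos: "0 < lam" "0 < N" "0 < t" "0 < m" "0 < s" "0 < v"
  shows "(2 \<le> t \<and> t \<le> m * (t - 1) \<and> OCA_exists lam N t m (t - 1) v
            \<longrightarrow> OCA_exists lam N t m t v)
       \<and> (2 \<le> s \<and> 2 \<le> t \<and> t \<le> m * (s - 1) \<and> OCA_exists lam N t m s v
            \<longrightarrow> OCA_exists lam N t m (s - 1) v)
       \<and> (2 \<le> m \<and> 2 \<le> t \<and> t \<le> (m - 1) * s \<and> OCA_exists lam N t m s v
            \<longrightarrow> OCA_exists lam N t (m - 1) s v)"
proof (intro conjI impI)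
  assume h: "2 \<le> t \<and> t \<le> m * (t - 1) \<and> OCA_exists lam N t m (t - 1) v"
  obtain p where tp: "t = Suc p" using pos(3) by (cases t) auto
  then have p: "t - 1 = p" by simp
  obtain A where A: "is_OCA lam N (Suc p) m p v A" using h unfolding OCA_exists_def tp by auto
  show "OCA_exists lam N t m t v" using part1[OF A] h unfolding tp by simp
next
  assume h: "2 \<le> s \<and> 2 \<le> t \<and> t \<le> m * (s - 1) \<and> OCA_exists lam N t m s v"
  obtain p where sp: "s = Suc p" using pos(5) by (cases s) auto
  obtain A where A: "is_OCA lam N t m (Suc p) v A" using h unfolding OCA_exists_def sp by auto
  have "0 < p" using h sp by simp
  then show "OCA_exists lam N t m (s - 1) v" using part2[OF A] h unfolding sp by simp
next
  assume h: "2 \<le> m \<and> 2 \<le> t \<and> t \<le> (m - 1) * s \<and> OCA_exists lam N t m s v"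
  obtain M where mM: "m = Suc M" using pos(4) by (cases m) auto
  obtain A where A: "is_OCA lam N t (Suc M) s v A" using h unfolding OCA_exists_def mM by auto
  show "OCA_exists lam N t (m - 1) s v" using part3[OF A _ _ pos(5)] h unfolding mM by simp
qed

end
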